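(* Let $X,Z\in\mathbb{R}^{n\times r}$ with $\mathbf{e}:=\mathrm{vec}(XX^{T}-ZZ^{T})\ne0$ and $\sigma_{r}(X)>0$, and let $\alpha=\|Z_{\perp}Z_{\perp}^{T}\|_{F}/\|XX^{T}-ZZ^{T}\|_{F}$ where $Z_{\perp}=(I-XX^{\dagger})Z$. Then for every $w\in\mathbb{R}^{n^{2}}$ with $\|\mathbf{e}\|\,\|(I-\mathbf{J}\mathbf{J}^{\dagger})w\|\le1$, $$\max_{y\in\mathbb{R}^{nr}}\{\mathbf{e}^{T}(\mathbf{J}y-w):\|\mathbf{e}\|\,\|\mathbf{J}y-w\|=1\}=\sqrt{1-\alpha^{2}}\sqrt{1-\|\mathbf{e}\|^{2}\|(I-\mathbf{J}\mathbf{J}^{\dagger})w\|^{2}}-\mathbf{e}^{T}(I-\mathbf{J}\mathbf{J}^{\dagger})w.$$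
   Context: $\mathrm{vec}$ is column-stacking vectorization; $\mathbf{J}\in\mathbb{R}^{n^{2}\times nr}$ satisfies $\mathbf{J}\,\mathrm{vec}(Y)=\mathrm{vec}(XY^{T}+YX^{T})$ for all $Y\in\mathbb{R}^{n\times r}$; $\dagger$ denotes the Moore–Penrose pseudoinverse; $\sigma_{r}(X)$ is the $r$-th largest singular value of $X$. *)

theory Defs
  imports "HOL-Analysis.Analysis"
begin

text \<open>Matrices are Cartesian-type matrices: an n x r real matrix is
  real^'r^'n (rows indexed by 'n, columns by 'r).\<close>

text \<open>Column-stacking
  only fixes an ordering of the index set, which is irrelevant for the Euclidean
  structure (norms, inner products, matrix-vector products).\<close>
definition vecm :: "real^'c^'b \<Rightarrow> real^('b \<times> 'c)" where
  "vecm M = (\<chi> ij. M $ fst ij $ snd ij)"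

definition frob :: "real^'c^'b \<Rightarrow> real" where
  "frob M = norm (vecm M)"

definition pinv :: "real^'c^'b \<Rightarrow> real^'b^'c" where
  "pinv A = (THE B. A ** B ** A = A \<and> B ** A ** B = B \<and>
                    transpose (A ** B) = A ** B \<and> transpose (B ** A) = B ** A)"

definition Jmat :: "real^'r^'n \<Rightarrow> real^('n \<times> 'r)^('n \<times> 'n)" where
  "Jmat X = (THE J. \<forall>Y::real^'r^'n.
      J *v vecm Y = vecm (X ** transpose Y + Y ** transpose X))"

text \<open>k-th largest singular value of a matrix (Courant--Fischer max-min
  characterisation): the max over k-dimensional subspaces V of the min of |Xv|
  over unit vectors v in V.\<close>
definition sing_val :: "real^'r^'n \<Rightarrow> nat \<Rightarrow> real" where
  "sing_val X k = Sup ((\<lambda>V. Inf ((\<lambda>v. norm (X *v v)) ` {v\<in>V. norm v = 1}))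
                       ` {V. subspace V \<and> dim V = k})"

end

theory Submission
  imports Defs
begin

definition projm :: "(real^'n) set \<Rightarrow> real^'n^'n" where
  "projm B = (\<chi> i j. \<Sum>b\<in>B. b$i * b$j)"

lemma projm_mult: "projm B *v x = (\<Sum>b\<in>B. (b \<bullet> x) *\<^sub>R b)"
  by (simp add: vec_eq_iff projm_def matrix_vector_mult_def inner_vec_def sum_component
      sum_distrib_left sum_distrib_right ac_simps sum.swap[of _ B])

lemma projm_sym: "transpose (projm B) = projm B"
  by (simp add: projm_def transpose_def vec_eq_iff mult.commute)

lemma proj_exists:
  fixes S :: "(real^'n) set"
  assumes "subspace S"
  obtains p :: "real^'n^'n" where "\<And>x. p *v x \<in> S" "\<And>x. x \<in> S \<Longrightarrow> p *v x = x"
    "transpose p = p"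
proof -
  obtain B where B: "B \<subseteq> S" "pairwise orthogonal B" "\<And>x. x \<in> B \<Longrightarrow> norm x = 1"
     "independent B" "span B = S"
    using orthonormal_basis_subspace[OF assms] by metis
  have fB: "finite B" using B(4) independent_imp_finite by blast
  have bb: "b \<bullet> b = 1" if "b \<in> B" for b using B(3)[OF that] by (simp add: power2_norm_eq_inner[symmetric])
  have inB: "projm B *v x \<in> S" for x
    unfolding projm_mult using B(1) assms
    by (intro subspace_sum subspace_scale) auto
  have orth: "b \<bullet> (x - projm B *v x) = 0" if "b \<in> B" for b x
  proof -
    have "b \<bullet> (projm B *v x) = (\<Sum>c\<in>B. (c \<bullet> x) * (b \<bullet> c))"
      by (simp add: projm_mult inner_sum_right)
    also have "\<dots> = (\<Sum>c\<in>B. if c = b then b \<bullet> x else 0)"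
      using B(2) that bb by (intro sum.cong) (auto simp: pairwise_def orthogonal_def inner_commute)
    also have "\<dots> = b \<bullet> x" using fB that by simp
    finally show ?thesis by (simp add: inner_diff_right)
  qed
  have fixS: "projm B *v x = x" if "x \<in> S" for x
  proof -
    let ?d = "x - projm B *v x"
    have "?d \<in> span B" using B(5) that inB assms by (simp add: subspace_diff)
    moreover have "orthogonal ?d y" if "y \<in> span B" for y
      using orthogonal_to_span[of y B ?d] orth that
      by (simp add: orthogonal_def inner_commute)
    ultimately have "orthogonal ?d ?d" by blast
    then show ?thesis by (metis orthogonal_self eq_iff_diff_eq_0)
  qed
  show ?thesis using that[OF inB fixS projm_sym] by blast
qed

definition pen :: "real^'c^'b \<Rightarrow> real^'b^'c \<Rightarrow> bool" where
  "pen A B \<longleftrightarrow> A ** B ** A = A \<and> B ** A ** B = B \<and>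
                    transpose (A ** B) = A ** B \<and> transpose (B ** A) = B ** A"

lemma sym_inner: "transpose p = p \<Longrightarrow> (p *v x) \<bullet> (y::real^'n) = x \<bullet> (p *v y)"
  by (metis dot_lmul_matrix inner_commute transpose_matrix_vector)

lemma transp_inner: "(transpose A *v y) \<bullet> (x::real^'n) = y \<bullet> (A *v x)"
  by (simp add: dot_lmul_matrix)

lemma pen_unique:
  assumes "pen A B" "pen A C" shows "B = C"
proof -
  have a1: "A ** B ** A = A" "B ** A ** B = B" "transpose (A ** B) = A ** B" "transpose (B ** A) = B ** A"
    using assms(1) by (auto simp: pen_def)
  have a2: "A ** C ** A = A" "C ** A ** C = C" "transpose (A ** C) = A ** C" "transpose (C ** A) = C ** A"
    using assms(2) by (auto simp: pen_def)
  have "B = B ** transpose (A ** B)" using a1 by (simp add: matrix_mul_assoc)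
  also have "\<dots> = B ** transpose B ** transpose A" by (simp add: matrix_transpose_mul matrix_mul_assoc)
  also have "\<dots> = B ** transpose B ** transpose (A ** C ** A)" using a2 by simp
  also have "\<dots> = B ** (transpose (A ** B)) ** (transpose (A ** C))"
    by (simp add: matrix_transpose_mul matrix_mul_assoc)
  also have "\<dots> = B ** A ** C" using a1 a2 by (simp add: matrix_mul_assoc)
  finally have 1: "B = B ** A ** C" .
  have "C = transpose (C ** A) ** C" using a2 by (simp add: matrix_mul_assoc)
  also have "\<dots> = transpose A ** transpose C ** C" by (simp add: matrix_transpose_mul matrix_mul_assoc)
  also have "\<dots> = transpose (A ** B ** A) ** transpose C ** C" using a1 by simp
  also have "\<dots> = transpose (B ** A) ** transpose (C ** A) ** C"
    by (simp add: matrix_transpose_mul matrix_mul_assoc)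
  also have "\<dots> = (B ** A) ** (C ** A) ** C" by (simp only: a1 a2)
  also have "\<dots> = B ** A ** (C ** A ** C)" by (simp add: matrix_mul_assoc)
  also have "\<dots> = B ** A ** C" using a2 by simp
  finally show ?thesis using 1 by simp
qed

lemma ker_orth:
  fixes A :: "real^'c^'b"
  shows "(\<forall>t\<in>range ((*v) (transpose A)). v \<bullet> t = 0) \<longleftrightarrow> A *v v = 0"
proof
  assume h: "\<forall>t\<in>range ((*v) (transpose A)). v \<bullet> t = 0"
  have "v \<bullet> (transpose A *v (A *v v)) = 0" using h by blast
  then have "(A *v v) \<bullet> (A *v v) = 0" by (metis transp_inner inner_commute)
  then show "A *v v = 0" by simp
next
  assume "A *v v = 0" then show "\<forall>t\<in>range ((*v) (transpose A)). v \<bullet> t = 0"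
    by (auto simp: dot_lmul_matrix inner_commute[of v])
qed

lemma proj_idem:
  assumes "\<And>x. p *v x \<in> S" "\<And>x. x \<in> S \<Longrightarrow> p *v x = x"
  shows "p ** p = p"
  by (simp add: matrix_eq assms flip: matrix_vector_mul_assoc)

lemma proj_orth:
  fixes p :: "real^'n^'n"
  assumes "\<And>x. p *v x \<in> S" "\<And>x. x \<in> S \<Longrightarrow> p *v x = x" "transpose p = p"
    "\<forall>s\<in>S. v \<bullet> s = 0"
  shows "p *v v = 0"
proof -
  have "(p *v v) \<bullet> (p *v v) = v \<bullet> (p *v (p *v v))" using sym_inner[OF assms(3)] by blast
  also have "\<dots> = v \<bullet> (p *v v)" using assms(1,2) by simp
  also have "\<dots> = 0" using assms(1,4) by blast
  finally show ?thesis by simp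
qed

lemma pen_exists:
  fixes A :: "real^'c^'b"
  shows "\<exists>G. pen A G"
proof -
  let ?R = "range ((*v) A)" and ?T = "range ((*v) (transpose A))"
  have sR: "subspace ?R" and sT: "subspace ?T"
    by (rule linear_subspace_image[OF matrix_vector_mul_linear subspace_UNIV])+
  obtain PR where PR: "\<And>x. PR *v x \<in> ?R" "\<And>x. x \<in> ?R \<Longrightarrow> PR *v x = x" "transpose PR = PR"
    using proj_exists[OF sR] by blast
  obtain PT where PT: "\<And>x. PT *v x \<in> ?T" "\<And>x. x \<in> ?T \<Longrightarrow> PT *v x = x" "transpose PT = PT"
    using proj_exists[OF sT] by blast
  define xs where "xs j = (SOME x. A *v x = PR *v axis j 1)" for j
  have xs: "A *v xs j = PR *v axis j 1" for j
    unfolding xs_def using PR(1)[of "axis j 1"] by (metis (mono_tags, lifting) imageE someI)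
  define r where "r = (\<chi> i j. xs j $ i)"
  have Ar: "A ** r = PR"
  proof -
    have "(A ** r) $ i $ j = PR $ i $ j" for i j
    proof -
      have "(A ** r) $ i $ j = (A *v xs j) $ i"
        by (simp add: r_def matrix_matrix_mult_def matrix_vector_mult_def)
      also have "\<dots> = (PR *v axis j 1) $ i" by (simp only: xs)
      also have "\<dots> = PR $ i $ j" by (simp add: matrix_vector_mult_def axis_def mult.commute if_distrib if_distribR cong: if_cong)
      finally show ?thesis .
    qed
    then show ?thesis by (simp add: vec_eq_iff)
  qed
  have PRA: "PR ** A = A" by (simp add: matrix_eq PR(2) flip: matrix_vector_mul_assoc)
  have APT: "A ** PT = A"
  proof -
    have "A *v (x - PT *v x) = 0" for x
    proof -
      have "\<forall>t\<in>?T. (x - PT *v x) \<bullet> t = 0"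
      proof
        fix t assume "t \<in> ?T"
        then have "PT *v t = t" using PT(2) by blast
        then have "(PT *v x) \<bullet> t = x \<bullet> t" using sym_inner[OF PT(3)] by metis
        then show "(x - PT *v x) \<bullet> t = 0" by (simp add: inner_diff_left)
      qed
      then show ?thesis using ker_orth by blast
    qed
    then show ?thesis by (simp add: matrix_eq matrix_vector_mult_diff_distrib
          flip: matrix_vector_mul_assoc)
  qed
  have PRR: "PR ** PR = PR" using proj_idem[OF PR(1,2)] .
  have PTrA: "PT ** r ** A = PT"
  proof -
    have "PT *v (r *v (A *v x) - x) = 0" for x
    proof (rule proj_orth[OF PT])
      have "A *v (r *v (A *v x) - x) = 0"
        using matrix_vector_mul_assoc[of A r] matrix_vector_mul_assoc[of PR A] Ar PRA
        by (simp add: matrix_vector_mult_diff_distrib)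
      then show "\<forall>s\<in>?T. (r *v (A *v x) - x) \<bullet> s = 0" using ker_orth by blast
    qed
    then show ?thesis by (simp add: matrix_eq matrix_vector_mult_diff_distrib
          flip: matrix_vector_mul_assoc)
  qed
  define G where "G = PT ** r ** PR"
  have AG: "A ** G = PR" unfolding G_def
    by (metis APT Ar PRR matrix_mul_assoc)
  have GA: "G ** A = PT" unfolding G_def
    by (metis PRA PTrA matrix_mul_assoc)
  have "pen A G" unfolding pen_def
  proof (intro conjI)
    show "A ** G ** A = A" using AG PRA by simp
    show "G ** A ** G = G" using GA unfolding G_def
      by (metis PRR APT Ar matrix_mul_assoc)
    show "transpose (A ** G) = A ** G" using AG PR(3) by simp
    show "transpose (G ** A) = G ** A" using GA PT(3) by simp
  qed
  then show ?thesis by blast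
qed

lemma pinv_pen: "pen A (pinv A)"
proof -
  obtain G where G: "pen A G" using pen_exists by blast
  have "pinv A = G" unfolding pinv_def
    by (rule the_equality) (use G pen_unique in \<open>auto simp: pen_def\<close>)
  then show ?thesis using G by simp
qed

lemma mm_add_r: "((A::real^'m^'n) + B) ** (C::real^'k^'m) = A ** C + B ** C"
  by (simp add: matrix_matrix_mult_def vec_eq_iff sum.distrib algebra_simps)
lemma mm_add_l: "(A::real^'m^'n) ** ((B::real^'k^'m) + C) = A ** B + A ** C"
  by (simp add: matrix_add_ldistrib)
lemma mm_diff_r: "((A::real^'m^'n) - B) ** (C::real^'k^'m) = A ** C - B ** C"
  by (simp add: matrix_matrix_mult_def vec_eq_iff sum_subtractf algebra_simps)
lemma mm_diff_l: "(A::real^'m^'n) ** ((B::real^'k^'m) - C) = A ** B - A ** C"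
  by (simp add: matrix_matrix_mult_def vec_eq_iff sum_subtractf algebra_simps)
lemma mm_scale_l: "(k *\<^sub>R (A::real^'m^'n)) ** (B::real^'k^'m) = k *\<^sub>R (A ** B)"
  by (simp add: matrix_matrix_mult_def vec_eq_iff sum_distrib_left algebra_simps)
lemma mm_scale_r: "(A::real^'m^'n) ** (k *\<^sub>R (B::real^'k^'m)) = k *\<^sub>R (A ** B)"
  by (simp add: matrix_matrix_mult_def vec_eq_iff sum_distrib_left algebra_simps)
lemma tr_add: "transpose ((A::real^'m^'n) + B) = transpose A + transpose B"
  by (simp add: transpose_def vec_eq_iff)
lemma tr_diff: "transpose ((A::real^'m^'n) - B) = transpose A - transpose B"
  by (simp add: transpose_def vec_eq_iff)

definition unvecm :: "real^('b \<times> 'c) \<Rightarrow> real^'c^'b" where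
  "unvecm v = (\<chi> i j. v $ (i, j))"

lemma vecm_unvecm[simp]: "vecm (unvecm v) = v"
  by (simp add: vecm_def unvecm_def vec_eq_iff)
lemma unvecm_vecm[simp]: "unvecm (vecm A) = A"
  by (simp add: vecm_def unvecm_def vec_eq_iff)
lemma vecm_eq0: "vecm A = 0 \<longleftrightarrow> A = 0"
proof
  assume "vecm A = 0"
  then have "unvecm (vecm A) = unvecm 0" by simp
  then show "A = 0" by (simp add: unvecm_def vecm_def vec_eq_iff)
qed (simp add: vecm_def vec_eq_iff)

lemma vecm_add: "vecm (A + B) = vecm A + vecm B"
  by (simp add: vecm_def vec_eq_iff)
lemma vecm_diff: "vecm (A - B) = vecm A - vecm B"
  by (simp add: vecm_def vec_eq_iff)
lemma vecm_scale: "vecm (k *\<^sub>R A) = k *\<^sub>R vecm A"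
  by (simp add: vecm_def vec_eq_iff)
lemma vecm_neg: "vecm (- A) = - vecm A"
  by (simp add: vecm_def vec_eq_iff)

lemma sum_pair: "(\<Sum>ck\<in>(UNIV::('a::finite \<times> 'b::finite) set). f ck) = (\<Sum>c\<in>UNIV. \<Sum>k\<in>UNIV. f (c, k))"
  by (simp add: sum.cartesian_product)

lemma vecm_inner: "vecm A \<bullet> vecm B = (\<Sum>i\<in>UNIV. \<Sum>j\<in>UNIV. A$i$j * B$i$j)"
  unfolding inner_vec_def by (simp add: sum_pair vecm_def)

lemma sum3_swap: "(\<Sum>i\<in>I. \<Sum>j\<in>J. \<Sum>k\<in>K. f i j k) = (\<Sum>k\<in>K. \<Sum>j\<in>J. \<Sum>i\<in>I. (f i j k :: real))"
proof -
  have "(\<Sum>i\<in>I. \<Sum>j\<in>J. \<Sum>k\<in>K. f i j k) = (\<Sum>i\<in>I. \<Sum>k\<in>K. \<Sum>j\<in>J. f i j k)"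
    by (rule sum.cong[OF refl], rule sum.swap)
  also have "\<dots> = (\<Sum>k\<in>K. \<Sum>i\<in>I. \<Sum>j\<in>J. f i j k)" by (rule sum.swap)
  also have "\<dots> = (\<Sum>k\<in>K. \<Sum>j\<in>J. \<Sum>i\<in>I. f i j k)"
    by (rule sum.cong[OF refl], rule sum.swap)
  finally show ?thesis .
qed

lemma vecm_inner_left: "vecm A \<bullet> vecm (B ** C) = vecm (transpose B ** A) \<bullet> vecm C"
proof -
  have 1: "vecm A \<bullet> vecm (B ** C) = (\<Sum>i\<in>UNIV. \<Sum>j\<in>UNIV. \<Sum>k\<in>UNIV. A$i$j * B$i$k * C$k$j)"
    by (simp add: vecm_inner matrix_matrix_mult_def sum_distrib_left mult.assoc)
  have 2: "vecm (transpose B ** A) \<bullet> vecm C = (\<Sum>k\<in>UNIV. \<Sum>j\<in>UNIV. \<Sum>i\<in>UNIV. A$i$j * B$i$k * C$k$j)"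
    by (simp add: vecm_inner matrix_matrix_mult_def transpose_def sum_distrib_left mult_ac)
  show ?thesis unfolding 1 2 by (rule sum3_swap[where f = "\<lambda>i j k. A$i$j * B$i$k * C$k$j"])
qed

lemma vecm_inner_right: "vecm A \<bullet> vecm (B ** C) = vecm (A ** transpose C) \<bullet> vecm B"
proof -
  have 1: "vecm A \<bullet> vecm (B ** C) = (\<Sum>i\<in>UNIV. \<Sum>j\<in>UNIV. \<Sum>k\<in>UNIV. A$i$j * B$i$k * C$k$j)"
    by (simp add: vecm_inner matrix_matrix_mult_def sum_distrib_left mult.assoc)
  have 2: "vecm (A ** transpose C) \<bullet> vecm B = (\<Sum>i\<in>UNIV. \<Sum>k\<in>UNIV. \<Sum>j\<in>UNIV. A$i$j * B$i$k * C$k$j)"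
    by (simp add: vecm_inner matrix_matrix_mult_def transpose_def sum_distrib_left mult_ac)
  show ?thesis unfolding 1 2 by (rule sum.cong[OF refl]) (rule sum.swap)
qed

definition J0 :: "real^'r^'n \<Rightarrow> real^('n \<times> 'r)^('n \<times> 'n)" where
  "J0 X = (\<chi> ab ck. (if fst ck = snd ab then X $ fst ab $ snd ck else 0)
                   + (if fst ck = fst ab then X $ snd ab $ snd ck else 0))"


lemma J0_works: "J0 X *v vecm Y = vecm (X ** transpose Y + Y ** transpose X)"
proof -
  have "(J0 X *v vecm Y) $ (a, b) = vecm (X ** transpose Y + Y ** transpose X) $ (a, b)" for a b
  proof -
    have "(J0 X *v vecm Y) $ (a, b) = (\<Sum>ck\<in>UNIV. J0 X $ (a,b) $ ck * vecm Y $ ck)"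
      by (simp add: matrix_vector_mult_def)
    also have "\<dots> = (\<Sum>c\<in>UNIV. \<Sum>k\<in>UNIV. J0 X $ (a,b) $ (c,k) * vecm Y $ (c,k))"
      by (rule sum_pair)
    also have "\<dots> = (\<Sum>c\<in>UNIV. (if c = b then (\<Sum>k\<in>UNIV. X $ a $ k * Y $ c $ k) else 0)
        + (if c = a then (\<Sum>k\<in>UNIV. X $ b $ k * Y $ c $ k) else 0))"
      by (rule sum.cong[OF refl]) (simp add: J0_def vecm_def sum.distrib distrib_right)
    also have "\<dots> = (\<Sum>k\<in>UNIV. X $ a $ k * Y $ b $ k) + (\<Sum>k\<in>UNIV. X $ b $ k * Y $ a $ k)"
      by (simp add: sum.distrib)
    also have "\<dots> = vecm (X ** transpose Y + Y ** transpose X) $ (a, b)"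
      by (simp add: vecm_def matrix_matrix_mult_def transpose_def mult.commute)
    finally show ?thesis .
  qed
  then show ?thesis by (simp add: vec_eq_iff)
qed

lemma Jmat_works: "Jmat X *v vecm Y = vecm (X ** transpose Y + Y ** transpose X)"
proof -
  have "Jmat X = J0 X" unfolding Jmat_def
  proof (rule the_equality)
    show "\<forall>Y. J0 X *v vecm Y = vecm (X ** transpose Y + Y ** transpose X)" using J0_works by blast
  next
    fix J assume h: "\<forall>Y. J *v vecm Y = vecm (X ** transpose Y + Y ** transpose X)"
    show "J = J0 X" unfolding matrix_eq
    proof
      fix v
      have "J *v vecm (unvecm v) = J0 X *v vecm (unvecm v)" using h[rule_format, of "unvecm v"] J0_works[of X "unvecm v"] by simp
      then show "J *v v = J0 X *v v" by simp
    qed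
  qed
  then show ?thesis using J0_works by simp
qed

lemma J_vec: "Jmat X *v vecm Y = vecm (X ** transpose Y) + vecm (Y ** transpose X)"
  by (simp add: Jmat_works vecm_add)

lemma key_decomp:
  fixes X Z :: "real^'r^'n"
  defines "PX \<equiv> X ** pinv X"
  defines "Q \<equiv> mat 1 - PX"
  defines "W \<equiv> (Q ** Z) ** transpose (Q ** Z)"
  shows "\<exists>y0. Jmat X *v y0 = vecm (X ** transpose X - Z ** transpose Z + W)"
    and "\<And>y. vecm W \<bullet> (Jmat X *v y) = 0"
proof -
  define Gx where "Gx = pinv X"
  define M where "M = Z ** transpose Z"
  have pp: "X ** Gx ** X = X \<and> Gx ** X ** Gx = Gx \<and> transpose (X ** Gx) = X ** Gx \<and> transpose (Gx ** X) = Gx ** X"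
    using pinv_pen[of X] unfolding pen_def Gx_def .
  have pen1: "X ** Gx ** X = X" using pp by (rule conjunct1)
  have pen2: "transpose (X ** Gx) = X ** Gx" using pp by (elim conjE)
  have PX: "PX = X ** Gx" by (simp add: PX_def Gx_def)
  have PXX: "PX ** X = X" using pen1 pen2 PX by simp
  have PXT: "transpose PX = PX" using pen1 pen2 PX by simp
  have QT: "transpose Q = Q" by (simp add: Q_def tr_diff PXT)
  have QX: "Q ** X = 0" by (simp add: Q_def mm_diff_r PXX)
  have MT: "transpose M = M" by (simp add: M_def matrix_transpose_mul)
  have W: "W = Q ** M ** Q"
    by (simp add: W_def M_def matrix_transpose_mul QT matrix_mul_assoc)
  have XW: "transpose X ** W = 0"
  proof -
    have "transpose X ** Q = transpose (Q ** X)" by (simp add: matrix_transpose_mul QT)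
    also have "\<dots> = 0" by (simp add: QX transpose_def vec_eq_iff)
    finally have "transpose X ** Q = 0" .
    then show ?thesis by (simp add: W matrix_mul_assoc)
  qed
  have v0: "vecm (0::real^'n^'r) = 0" and v0': "vecm (0::real^'r^'n) = 0" by (simp_all add: vecm_eq0)
  have WX: "W ** X = 0"
    by (simp add: W QX flip: matrix_mul_assoc)
  show "vecm W \<bullet> (Jmat X *v y) = 0" for y
  proof -
    have "Jmat X *v y = vecm (X ** transpose (unvecm y)) + vecm (unvecm y ** transpose X)"
      using J_vec[of X "unvecm y"] by simp
    moreover have "vecm W \<bullet> vecm (X ** transpose (unvecm y)) = 0"
      by (simp only: vecm_inner_left XW v0) simp
    moreover have "vecm W \<bullet> vecm (unvecm y ** transpose X) = 0"
      by (simp only: vecm_inner_right transpose_transpose WX v0') simp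
    ultimately show ?thesis by (simp add: inner_add_right)
  qed
  define C where "C = Gx ** M ** transpose Gx"
  have CT: "transpose C = C" by (simp add: C_def matrix_transpose_mul MT matrix_mul_assoc)
  define B where "B = Q ** M ** transpose Gx"
  have half: "(1/2) *\<^sub>R A + (1/2) *\<^sub>R A = A" for A :: "real^'n^'n"
    by (simp flip: scaleR_add_left)
  have i: "Jmat X *v vecm ((1/2) *\<^sub>R X) = vecm (X ** transpose X)"
    by (simp add: Jmat_works transpose_scalar mm_scale_l mm_scale_r half)
  have ii: "Jmat X *v vecm ((1/2) *\<^sub>R (X ** C)) = vecm (PX ** M ** PX)"
  proof -
    have "PX ** M ** PX = X ** C ** transpose X"
    proof -
      have "PX ** M ** PX = X ** Gx ** M ** (transpose Gx ** transpose X)"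
        using PXT PX by (metis matrix_transpose_mul)
      then show ?thesis by (simp add: C_def matrix_mul_assoc)
    qed
    moreover have "X ** transpose ((1/2) *\<^sub>R (X ** C)) + (1/2) *\<^sub>R (X ** C) ** transpose X
        = X ** C ** transpose X"
      by (simp add: transpose_scalar mm_scale_l mm_scale_r matrix_transpose_mul CT
          matrix_mul_assoc half)
    ultimately show ?thesis by (simp add: Jmat_works)
  qed
  have iii: "Jmat X *v vecm B = vecm (PX ** M ** Q + Q ** M ** PX)"
  proof -
    have "X ** transpose B = PX ** M ** Q"
      by (simp add: B_def matrix_transpose_mul QT MT PX matrix_mul_assoc)
    moreover have "B ** transpose X = Q ** M ** PX"
    proof -
      have tg: "transpose Gx ** transpose X = PX"
        using PXT PX matrix_transpose_mul[of X Gx] by simp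
      have "B ** transpose X = Q ** M ** (transpose Gx ** transpose X)"
        by (simp add: B_def matrix_mul_assoc)
      then show ?thesis using tg by simp
    qed
    ultimately show ?thesis by (simp add: Jmat_works)
  qed
  have iv: "Z ** transpose Z - W = PX ** M ** PX + (PX ** M ** Q + Q ** M ** PX)"
    by (simp add: W Q_def M_def[symmetric] mm_diff_l mm_diff_r matrix_mul_assoc algebra_simps)
  show "\<exists>y0. Jmat X *v y0 = vecm (X ** transpose X - Z ** transpose Z + W)"
  proof
    show "Jmat X *v (vecm ((1/2) *\<^sub>R X) - vecm ((1/2) *\<^sub>R (X ** C)) - vecm B)
       = vecm (X ** transpose X - Z ** transpose Z + W)"
    proof -
      have "Jmat X *v (vecm ((1/2) *\<^sub>R X) - vecm ((1/2) *\<^sub>R (X ** C)) - vecm B)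
          = Jmat X *v vecm ((1/2) *\<^sub>R X) - Jmat X *v vecm ((1/2) *\<^sub>R (X ** C)) - Jmat X *v vecm B"
        by (simp add: matrix_vector_mult_diff_distrib)
      also have "\<dots> = vecm (X ** transpose X) - vecm (PX ** M ** PX) - vecm (PX ** M ** Q + Q ** M ** PX)"
        using i ii iii by simp
      also have "\<dots> = vecm (X ** transpose X - (PX ** M ** PX + (PX ** M ** Q + Q ** M ** PX)))"
        by (simp add: vecm_diff vecm_add)
      also have "\<dots> = vecm (X ** transpose X - (Z ** transpose Z - W))" using iv by simp
      also have "\<dots> = vecm (X ** transpose X - Z ** transpose Z + W)" by (simp add: algebra_simps)
      finally show ?thesis .
    qed
  qed
qed

lemma Xnz:
  fixes X :: "real^'r^'n"
  assumes "sing_val X CARD('r) > 0"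
  shows "X \<noteq> 0"
proof
  assume X0: "X = 0"
  let ?S = "{V :: (real^'r) set. subspace V \<and> dim V = CARD('r)}"
  let ?f = "\<lambda>V. Inf ((\<lambda>v. norm (X *v v)) ` {v\<in>V. norm v = 1})"
  have fV: "?f V = 0" if "V \<in> ?S" for V
  proof -
    have d: "dim V = CARD('r)" using that by blast
    have "\<not> V \<subseteq> {0}"
    proof
      assume "V \<subseteq> {0}"
      then have "dim V = 0" by (simp only: dim_eq_0)
      then show False using d by simp
    qed
    then obtain v where v: "v \<in> V" "v \<noteq> 0" by (auto simp: subset_eq)
    have "v /\<^sub>R norm v \<in> V" using that v by (auto intro: subspace_scale)
    moreover have "norm (v /\<^sub>R norm v) = 1" using v by simp
    ultimately have ne: "{v\<in>V. norm v = 1} \<noteq> {}" by blast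
    have "(\<lambda>v. norm (X *v v)) ` {v\<in>V. norm v = 1} = {0}" using ne X0 by auto
    then show ?thesis by simp
  qed
  have U: "UNIV \<in> ?S" by (simp add: dim_UNIV)
  have "?f ` ?S = {0}"
  proof
    show "?f ` ?S \<subseteq> {0}" using fV by blast
    have "0 \<in> ?f ` ?S" by (rule image_eqI[of 0 ?f UNIV]) (use fV[OF U] U in auto)
    then show "{0} \<subseteq> ?f ` ?S" by blast
  qed
  then have "sing_val X CARD('r) = 0" unfolding sing_val_def by simp
  then show False using assms by simp
qed

lemma norm_diff_orth: "(u::'a::real_inner) \<bullet> p = 0 \<Longrightarrow> (norm (u - p))\<^sup>2 = (norm u)\<^sup>2 + (norm p)\<^sup>2"
  by (simp add: power2_norm_eq_inner inner_diff_left inner_diff_right inner_commute)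


lemma XXT_nz:
  fixes X :: "real^'r^'n"
  assumes "X \<noteq> 0"
  shows "vecm (X ** transpose X + X ** transpose X) \<noteq> 0"
proof
  assume "vecm (X ** transpose X + X ** transpose X) = 0"
  then have z: "X ** transpose X + X ** transpose X = 0" by (simp add: vecm_eq0)
  obtain i k where ik: "X $ i $ k \<noteq> 0" using assms by (metis vec_eq_iff zero_index)
  have "(X $ i $ k)\<^sup>2 \<le> (\<Sum>k'\<in>UNIV. (X $ i $ k')\<^sup>2)"
    by (rule member_le_sum) auto
  moreover have "(X $ i $ k)\<^sup>2 > 0" using ik by simp
  moreover have "(X ** transpose X + X ** transpose X) $ i $ i = 2 * (\<Sum>k'\<in>UNIV. (X $ i $ k')\<^sup>2)"
    by (simp add: matrix_matrix_mult_def transpose_def power2_eq_square)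
  ultimately have "(\<Sum>k'\<in>UNIV. (X $ i $ k')\<^sup>2) > 0" by linarith
  with \<open>(X ** transpose X + X ** transpose X) $ i $ i = 2 * (\<Sum>k'\<in>UNIV. (X $ i $ k')\<^sup>2)\<close>
  have "(X ** transpose X + X ** transpose X) $ i $ i \<noteq> 0" by simp
  then show False using z by simp
qed

theorem lemma17:
  fixes X Z :: "real^'r^'n"
    and w :: "real^('n \<times> 'n)"
  assumes he: "vecm (X ** transpose X - Z ** transpose Z) \<noteq> 0"
    and hs: "sing_val X CARD('r) > 0"
    and hw: "norm (vecm (X ** transpose X - Z ** transpose Z)) *
             norm ((mat 1 - Jmat X ** pinv (Jmat X)) *v w) \<le> 1"
  shows "let e = vecm (X ** transpose X - Z ** transpose Z);
             J = Jmat X;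
             P = mat 1 - J ** pinv J;
             Zp = (mat 1 - X ** pinv X) ** Z;
             \<alpha> = frob (Zp ** transpose Zp) / frob (X ** transpose X - Z ** transpose Z);
             S = {e \<bullet> (J *v y - w) | y. norm e * norm (J *v y - w) = 1};
             m = sqrt (1 - \<alpha>\<^sup>2) * sqrt (1 - (norm e)\<^sup>2 * (norm (P *v w))\<^sup>2) - e \<bullet> (P *v w)
         in m \<in> S \<and> (\<forall>t\<in>S. t \<le> m)"
proof -
  define e where "e = vecm (X ** transpose X - Z ** transpose Z)"
  define J where "J = Jmat X"
  define G where "G = pinv J"
  define Pr where "Pr = J ** G"
  define P where "P = mat 1 - J ** pinv J"
  define Zp where "Zp = (mat 1 - X ** pinv X) ** Z"
  define al where "al = frob (Zp ** transpose Zp) / frob (X ** transpose X - Z ** transpose Z)"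
  define S where "S = {e \<bullet> (J *v y - w) | y. norm e * norm (J *v y - w) = 1}"
  define m where "m = sqrt (1 - al\<^sup>2) * sqrt (1 - (norm e)\<^sup>2 * (norm (P *v w))\<^sup>2) - e \<bullet> (P *v w)"
  define W where "W = Zp ** transpose Zp"
  define a where "a = norm e"
  have a0: "a > 0" using he by (simp add: a_def e_def)
  have pp: "J ** G ** J = J \<and> G ** J ** G = G \<and> transpose (J ** G) = J ** G \<and> transpose (G ** J) = G ** J"
    using pinv_pen[of J] unfolding pen_def G_def .
  have JGJ: "J ** G ** J = J" using pp by (rule conjunct1)
  have PrT: "transpose Pr = Pr" unfolding Pr_def using pp by (elim conjE)
  have PrJ: "Pr *v (J *v y) = J *v y" for y
    using JGJ by (simp add: Pr_def matrix_vector_mul_assoc)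
  have PrR: "Pr *v v = J *v (G *v v)" for v by (simp add: Pr_def matrix_vector_mul_assoc)
  have Prsym: "(Pr *v u) \<bullet> v = u \<bullet> (Pr *v v)" for u v using sym_inner[OF PrT] .
  have Pridem: "Pr *v (Pr *v v) = Pr *v v" for v using PrR PrJ by simp
  have Pv: "P *v v = v - Pr *v v" for v
    by (simp add: P_def Pr_def G_def matrix_vector_mult_diff_rdistrib)
  obtain y0 where y0: "J *v y0 = e + vecm W"
    using key_decomp(1)[of X Z] by (auto simp: J_def e_def W_def Zp_def vecm_add)
  have Worth: "vecm W \<bullet> (J *v y) = 0" for y
    using key_decomp(2)[of X Z] by (simp add: J_def W_def Zp_def)
  have PrW: "Pr *v vecm W = 0"
  proof -
    have "(Pr *v vecm W) \<bullet> (Pr *v vecm W) = vecm W \<bullet> (Pr *v (Pr *v vecm W))" using Prsym by blast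
    also have "\<dots> = 0" using Pridem PrR Worth by simp
    finally show ?thesis by simp
  qed
  define h where "h = Pr *v e"
  have h: "h = e + vecm W"
  proof -
    have e: "e = J *v y0 - vecm W" using y0 by simp
    have "Pr *v e = Pr *v (J *v y0) - Pr *v vecm W"
      by (subst e) (simp only: matrix_vector_mult_diff_distrib)
    also have "\<dots> = J *v y0" by (simp only: PrJ PrW diff_zero)
    also have "\<dots> = e + vecm W" by (rule y0)
    finally show ?thesis unfolding h_def .
  qed
  have hW: "h \<bullet> vecm W = 0" using Worth[of y0] y0 h by (simp add: inner_commute)
  have enorm: "a\<^sup>2 = (norm h)\<^sup>2 + (norm (vecm W))\<^sup>2"
  proof -
    have "e = h - vecm W" using h by simp
    then show ?thesis unfolding a_def using norm_diff_orth[OF hW] by simp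
  qed
  have al: "al = norm (vecm W) / a"
    by (simp add: al_def W_def frob_def a_def e_def)
  have sq1: "sqrt (1 - al\<^sup>2) = norm h / a"
  proof -
    have a2: "a\<^sup>2 \<noteq> 0" using a0 by simp
    have "(norm h / a)\<^sup>2 = (a\<^sup>2 - (norm (vecm W))\<^sup>2) / a\<^sup>2" using enorm by (simp add: power_divide)
    also have "\<dots> = 1 - (norm (vecm W) / a)\<^sup>2" using a2 by (simp add: power_divide diff_divide_distrib)
    finally have "1 - al\<^sup>2 = (norm h / a)\<^sup>2" unfolding al by simp
    then show ?thesis using a0 by simp
  qed
  define p where "p = P *v w"
  have p: "p = w - Pr *v w" by (simp add: p_def Pv)
  have Prp: "Pr *v p = 0" using Pridem by (simp add: p matrix_vector_mult_diff_distrib)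
  have range_orth: "u \<bullet> p = 0" if "Pr *v u = u" for u
  proof -
    have "u \<bullet> p = (Pr *v u) \<bullet> p" using that by simp
    also have "\<dots> = 0" using Prsym Prp by simp
    finally show ?thesis .
  qed
  have ap: "a * norm p \<le> 1" using hw by (simp add: a_def e_def p_def P_def J_def)
  have ap2: "a\<^sup>2 * (norm p)\<^sup>2 \<le> 1"
  proof -
    have "(a * norm p)\<^sup>2 \<le> 1\<^sup>2" using ap a0 by (intro power_mono) auto
    then show ?thesis by (simp add: power_mult_distrib)
  qed
  define c where "c = sqrt (1 - a\<^sup>2 * (norm p)\<^sup>2) / a"
  have sq0: "sqrt (1 - a\<^sup>2 * (norm p)\<^sup>2) \<ge> 0" using ap2 by simp
  have c0: "c \<ge> 0" unfolding c_def by (rule divide_nonneg_pos[OF sq0 a0])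
  have c2: "c\<^sup>2 + (norm p)\<^sup>2 = 1 / a\<^sup>2"
    using a0 ap2 by (simp add: c_def power_divide field_simps)
  have m: "m = norm h * c - e \<bullet> p"
    unfolding m_def sq1 c_def using a0 by (simp add: a_def p_def)
  have eu: "e \<bullet> u = h \<bullet> u" if "Pr *v u = u" for u
    using Prsym[of e u] that by (simp add: h_def)
  have upper: "t \<le> m" if tS: "t \<in> S" for t
  proof -
    obtain y where t: "t = e \<bullet> (J *v y - w)" and y: "norm e * norm (J *v y - w) = 1"
      using tS by (auto simp: S_def)
    define u where "u = J *v y - Pr *v w"
    have Pru: "Pr *v u = u" using PrJ Pridem by (simp add: u_def matrix_vector_mult_diff_distrib)
    have d: "J *v y - w = u - p" by (simp add: u_def p)
    have "(norm (u - p))\<^sup>2 = (norm u)\<^sup>2 + (norm p)\<^sup>2" using norm_diff_orth range_orth[OF Pru] by blast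
    moreover have "norm (u - p) = 1 / a" using y d a0 by (simp add: a_def field_simps)
    ultimately have "(norm u)\<^sup>2 = c\<^sup>2" using c2 by (simp add: power_divide)
    then have nu: "norm u = c" using c0 by (simp add: power2_eq_iff_nonneg)
    have "t = e \<bullet> u - e \<bullet> p" using t d by (simp add: inner_diff_right)
    also have "\<dots> = h \<bullet> u - e \<bullet> p" using eu[OF Pru] by simp
    also have "\<dots> \<le> norm h * c - e \<bullet> p" using norm_cauchy_schwarz[of h u] nu by simp
    finally show ?thesis using m by simp
  qed
  obtain y1 where y1: "norm (J *v y1) = c" "h \<bullet> (J *v y1) = norm h * c"
  proof (cases "h = 0")
    case False
    define y1 where "y1 = (c / norm h) *\<^sub>R (G *v e)"
    have "J *v y1 = (c / norm h) *\<^sub>R h"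
      by (simp add: y1_def h_def PrR
          matrix_vector_mult_scaleR)
    then show ?thesis using False c0
      by (intro that[of y1]) (auto simp: power2_norm_eq_inner[symmetric] power2_eq_square)
  next
    case True
    define v0 where "v0 = J *v vecm X"
    have v0: "v0 \<noteq> 0" using XXT_nz[OF Xnz[OF hs]] by (simp add: v0_def J_def Jmat_works)
    define y1 where "y1 = (c / norm v0) *\<^sub>R vecm X"
    have "J *v y1 = (c / norm v0) *\<^sub>R v0"
      by (simp add: y1_def v0_def matrix_vector_mult_scaleR)
    then show ?thesis using True v0 c0 by (intro that[of y1]) auto
  qed
  define u where "u = J *v y1"
  have Pru: "Pr *v u = u" using PrJ by (simp add: u_def)
  define y where "y = G *v w + y1"
  have d: "J *v y - w = u - p"
  proof -
    have "J *v y = Pr *v w + u" by (simp add: y_def u_def PrR matrix_vector_right_distrib)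
    then show ?thesis by (simp add: p)
  qed
  have "(norm (u - p))\<^sup>2 = c\<^sup>2 + (norm p)\<^sup>2"
    using norm_diff_orth[OF range_orth[OF Pru]] y1(1) by (simp add: u_def)
  then have "(norm (u - p))\<^sup>2 = (1 / a)\<^sup>2" using c2 by (simp add: power_divide)
  then have "norm (u - p) = 1 / a" using a0 by (simp add: power2_eq_iff_nonneg)
  then have cons: "norm e * norm (J *v y - w) = 1" using d a0 by (simp add: a_def)
  have val: "e \<bullet> (J *v y - w) = m"
  proof -
    have "e \<bullet> (J *v y - w) = e \<bullet> u - e \<bullet> p" using d by (simp add: inner_diff_right)
    also have "\<dots> = h \<bullet> u - e \<bullet> p" using eu[OF Pru] by simp
    also have "\<dots> = m" using y1(2) m by (simp add: u_def)
    finally show ?thesis .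
  qed
  have mS: "m \<in> S" unfolding S_def using cons val by blast
  have goal: "m \<in> S \<and> (\<forall>t\<in>S. t \<le> m)" using mS upper by blast
  show ?thesis unfolding Let_def
    by (rule goal[unfolded m_def S_def al_def Zp_def P_def J_def e_def])
qed

end
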